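(* For $\tau>-1$, the function $r\mapsto\frac{h_u'(r)}{r}$ is increasing on $(0,j_\tau)$, where $h_u(r):=r\frac{J_{\tau+1}(r)}{J_\tau(r)}$.
   Context: $J_\tau$ denotes the Bessel function of the first kind of order $\tau$ and $j_\tau$ its first positive zero. *)

theory Defs
  imports "HOL-Analysis.Analysis"
begin

text \<open>Bessel function of the first kind of real order tau, via its power series
  (used for r > 0):
  J_tau(r) = sum_m (-1)^m / (m! Gamma(m+tau+1)) (r/2)^(2m+tau).\<close>
definition besselJ :: "real \<Rightarrow> real \<Rightarrow> real" where
  "besselJ \<tau> r = (\<Sum>m. (-1) ^ m / (fact m * Gamma (real m + \<tau> + 1)) * (r / 2) powr (2 * real m + \<tau>))"

definition bessel_zero :: "real \<Rightarrow> real" where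
  "bessel_zero \<tau> = Inf {r. 0 < r \<and> besselJ \<tau> r = 0}"

definition h_u :: "real \<Rightarrow> real \<Rightarrow> real" where
  "h_u \<tau> r = r * besselJ (\<tau> + 1) r / besselJ \<tau> r"

end

theory Submission
  imports Defs
begin

lemma Gamma_plus1_pos: "(z::real) > 0 \<Longrightarrow> Gamma (z + 1) = z * Gamma z"
  by (rule Gamma_plus1) (auto elim!: nonpos_Ints_cases)

definition cc :: "real \<Rightarrow> nat \<Rightarrow> real" where
  "cc t m = (-1) ^ m / (fact m * Gamma (real m + t + 1))"

definition FF :: "real \<Rightarrow> real \<Rightarrow> real" where
  "FF t x = (\<Sum>m. cc t m * x ^ m)"

lemma cc_Suc: assumes "t > -1"
  shows "cc t (Suc n) = cc t n * (-1 / ((real n + 1) * (real n + t + 1)))"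
proof -
  have g: "Gamma (real (Suc n) + t + 1) = (real n + t + 1) * Gamma (real n + t + 1)"
    using Gamma_plus1_pos[of "real n + t + 1"] assms by (simp add: algebra_simps)
  have "Gamma (real n + t + 1) > 0" using assms by auto
  then show ?thesis unfolding cc_def g using assms
    by (simp add: field_simps)
qed

lemma cc_summable: assumes "t > -1" shows "summable (\<lambda>m. cc t m * x ^ m)"
proof (rule summable_ratio_test[of "1/2" "nat \<lceil>2 * \<bar>x\<bar>\<rceil> + 1"])
  fix n assume n: "nat \<lceil>2 * \<bar>x\<bar>\<rceil> + 1 \<le> n"
  have n1: "real n \<ge> 2 * \<bar>x\<bar> + 1" using n by linarith
  have pos: "real n + t + 1 > 0" using assms by linarith
  have "(real n + 1) * (real n + t + 1) \<ge> 2 * \<bar>x\<bar>"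
  proof -
    have "real n + t + 1 \<ge> 0" using pos by simp
    have "(real n + 1) * (real n + t + 1) \<ge> 1 * (real n + t + 1)"
      using pos by (intro mult_right_mono) auto
    moreover have "1 * (real n + t + 1) \<ge> 2 * \<bar>x\<bar>" using n1 assms by simp
    ultimately show ?thesis by linarith
  qed
  then have q: "\<bar>x\<bar> / ((real n + 1) * (real n + t + 1)) \<le> 1/2"
  proof -
    have "(real n + 1) * (real n + t + 1) > 0" using pos by simp
    then show ?thesis using \<open>(real n + 1) * (real n + t + 1) \<ge> 2 * \<bar>x\<bar>\<close>
      by (simp add: divide_le_eq)
  qed
  have "norm (cc t (Suc n) * x ^ Suc n) = (\<bar>x\<bar> / ((real n + 1) * (real n + t + 1))) * norm (cc t n * x ^ n)"
  proof -
    have D: "(real n + 1) * (real n + t + 1) > 0" using pos by simp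
    have "norm (cc t (Suc n) * x ^ Suc n) = \<bar>cc t n\<bar> * (1 / ((real n + 1) * (real n + t + 1))) * (\<bar>x\<bar> * \<bar>x\<bar> ^ n)"
      using pos by (simp add: cc_Suc[OF assms] abs_mult power_abs abs_divide abs_of_pos[OF D])
    then show ?thesis by (simp add: abs_mult power_abs)
  qed
  also have "\<dots> \<le> 1/2 * norm (cc t n * x ^ n)"
    by (intro mult_right_mono q) simp
  finally show "norm (cc t (Suc n) * x ^ Suc n) \<le> 1/2 * norm (cc t n * x ^ n)" .
qed simp

definition ps :: "(nat \<Rightarrow> real) \<Rightarrow> real \<Rightarrow> real" where
  "ps c x = (\<Sum>n. c n * x ^ n)"

lemma ps_deriv: fixes c :: "nat \<Rightarrow> real" assumes "\<And>y. summable (\<lambda>n. c n * y ^ n)"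
  shows "(ps c has_real_derivative ps (diffs c) x) (at x)"
  unfolding ps_def by (rule termdiffs_strong_converges_everywhere[OF assms])

lemma diffs_summable: fixes c :: "nat \<Rightarrow> real" assumes "\<And>y. summable (\<lambda>n. c n * y ^ n)"
  shows "summable (\<lambda>n. diffs c n * y ^ n)"
  by (rule termdiff_converges_all) (rule assms)

lemma FF_ps: "FF t = ps (cc t)" unfolding FF_def ps_def by auto

lemma aux_cancel2: "(a::real) \<noteq> 0 \<Longrightarrow> a * (x / (a * g)) = x / g"
  by (cases "g = 0") (auto simp: field_simps)

lemma diffs_cc: assumes "t > -1" shows "diffs (cc t) n = - cc (t + 1) n"
proof -
  have "diffs (cc t) n = real (Suc n) * cc t (Suc n)" by (simp add: diffs_def)
  also have "\<dots> = - cc (t+1) n"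
  proof -
    have g: "Gamma (real (Suc n) + t + 1) = (real n + t + 1) * Gamma (real n + t + 1)"
      using Gamma_plus1_pos[of "real n + t + 1"] assms by (simp add: algebra_simps)
    have g2: "Gamma (real n + (t + 1) + 1) = (real n + t + 1) * Gamma (real n + t + 1)"
      using Gamma_plus1_pos[of "real n + t + 1"] assms by (simp add: algebra_simps)
    have aux: "real (Suc n) * ((-1) ^ Suc n / (fact (Suc n) * X)) = - ((-1) ^ n / (fact n * X))" for X :: real
    proof -
      have e: "fact (Suc n) * X = real (Suc n) * (fact n * X)" by (simp add: algebra_simps)
      have "real (Suc n) * ((-1) ^ Suc n / (real (Suc n) * (fact n * X))) = (-1) ^ Suc n / (fact n * X)"
        by (rule aux_cancel2) simp
      then show ?thesis unfolding e by simp
    qed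
    show ?thesis unfolding cc_def g g2 by (rule aux)
  qed
  finally show ?thesis .
qed

lemma aux_cancel: "(a::real) \<noteq> 0 \<Longrightarrow> a * (x / (f * (a * g))) = x / (f * g)"
  by (cases "f = 0"; cases "g = 0") (auto simp: field_simps)

lemma cc_rel: assumes "t > -1" shows "(real m + t + 1) * cc (t+1) m = cc t m"
proof -
  have g2: "Gamma (real m + (t + 1) + 1) = (real m + t + 1) * Gamma (real m + t + 1)"
    using Gamma_plus1_pos[of "real m + t + 1"] assms by (simp add: algebra_simps)
  have "real m + t + 1 \<noteq> 0" using assms by auto
  then show ?thesis unfolding cc_def g2 by (rule aux_cancel)
qed

lemma ps_sums: assumes "summable (\<lambda>n. c n * x ^ n)" shows "(\<lambda>n. c n * x ^ n) sums ps c x"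
  unfolding ps_def using assms by (simp add: summable_sums)

lemma G_rel: assumes "t > -1"
  shows "x * ps (diffs (cc (t+1))) x = ps (cc t) x - (t+1) * ps (cc (t+1)) x"
proof -
  define d where "d = cc (t+1)"
  have sd: "\<And>y. summable (\<lambda>n. d n * y ^ n)" unfolding d_def using assms by (intro cc_summable) auto
  define f where "f m = real m * d m * x ^ m" for m
  have "(\<lambda>n. x * (diffs d n * x ^ n)) sums (x * ps (diffs d) x)"
    by (intro sums_mult ps_sums diffs_summable sd)
  moreover have "(\<lambda>n. x * (diffs d n * x ^ n)) = (\<lambda>n. f (Suc n))"
    by (auto simp: f_def diffs_def algebra_simps)
  ultimately have "(\<lambda>n. f (Suc n)) sums (x * ps (diffs d) x)" by simp
  then have "f sums (x * ps (diffs d) x + f 0)" by (simp add: sums_Suc_iff)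
  then have s1: "f sums (x * ps (diffs d) x)" by (simp add: f_def)
  have s2: "(\<lambda>n. (t+1) * (d n * x ^ n)) sums ((t+1) * ps d x)"
    by (intro sums_mult ps_sums sd)
  have "(\<lambda>n. f n + (t+1) * (d n * x ^ n)) sums (x * ps (diffs d) x + (t+1) * ps d x)"
    by (rule sums_add[OF s1 s2])
  moreover have "(\<lambda>n. f n + (t+1) * (d n * x ^ n)) = (\<lambda>n. cc t n * x ^ n)"
  proof
    fix n show "f n + (t+1) * (d n * x ^ n) = cc t n * x ^ n"
    proof -
      have "f n + (t+1) * (d n * x ^ n) = ((real n + t + 1) * cc (t+1) n) * x ^ n"
        by (simp add: f_def d_def algebra_simps)
      then show ?thesis using cc_rel[OF assms, of n] by simp
    qed
  qed
  ultimately have "(\<lambda>n. cc t n * x ^ n) sums (x * ps (diffs d) x + (t+1) * ps d x)" by simp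
  moreover have "(\<lambda>n. cc t n * x ^ n) sums ps (cc t) x" by (intro ps_sums cc_summable assms)
  ultimately show ?thesis unfolding d_def using sums_unique2 by fastforce
qed

lemma first_pos:
  fixes f f' :: "real \<Rightarrow> real"
  assumes ab: "a \<le> b" and der: "\<And>y. a \<le> y \<Longrightarrow> y \<le> b \<Longrightarrow> (f has_real_derivative f' y) (at y)"
    and fa: "f a > 0" and z: "\<And>y. a < y \<Longrightarrow> y \<le> b \<Longrightarrow> f y = 0 \<Longrightarrow> f' y > 0"
  shows "f b > 0"
proof (rule ccontr)
  assume nb: "\<not> f b > 0"
  have cont: "continuous_on {a..b} f"
    by (rule DERIV_atLeastAtMost_imp_continuous_on) (use der in blast)
  define T where "T = {y \<in> {a..b}. f y = 0}"
  obtain z0 where z0: "a \<le> z0" "z0 \<le> b" "f z0 = 0"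
    using IVT2'[of f b 0 a, OF _ _ ab cont] nb fa by force
  have Tne: "T \<noteq> {}" using z0 unfolding T_def by auto
  have Tcl: "closed T" unfolding T_def by (rule continuous_closed_preimage_constant[OF cont]) simp
  have Tbd: "bdd_below T" unfolding T_def by (auto intro!: bdd_belowI[of _ a])
  define s where "s = Inf T"
  have sT: "s \<in> T" unfolding s_def by (rule closed_contains_Inf[OF Tne Tbd Tcl])
  then have s: "a \<le> s" "s \<le> b" "f s = 0" unfolding T_def by auto
  have "s \<noteq> a" using s fa by auto
  with s have sa: "a < s" by simp
  have "f' s > 0" using z[OF sa s(2) s(3)] .
  then obtain d where d: "d > 0" "\<And>h. h > 0 \<Longrightarrow> h < d \<Longrightarrow> f (s - h) < f s"
    using DERIV_pos_inc_left[OF der[OF s(1) s(2)]] by blast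
  define h where "h = min d (s - a) / 2"
  have h: "h > 0" "h < d" "h < s - a" using d sa unfolding h_def by auto
  have fy: "f (s - h) < 0" using d(2)[OF h(1) h(2)] s(3) by simp
  have cont2: "continuous_on {a..s-h} f" using cont by (rule continuous_on_subset) (use s h in auto)
  obtain z1 where z1: "a \<le> z1" "z1 \<le> s - h" "f z1 = 0"
    using IVT2'[of f "s-h" 0 a, OF _ _ _ cont2] fy fa h by force
  have "z1 \<in> T" using z1 s h unfolding T_def by auto
  then have "s \<le> z1" unfolding s_def by (rule cInf_lower[OF _ Tbd])
  then show False using z1 h by linarith
qed

lemma deriv_eq_open:
  fixes f g :: "real \<Rightarrow> real"
  assumes "open S" "x \<in> S" "\<And>y. y \<in> S \<Longrightarrow> f y = g y"
    "(f has_real_derivative a) (at x)" "(g has_real_derivative b) (at x)"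
  shows "a = b"
proof -
  have "(g has_real_derivative a) (at x)"
    by (rule has_field_derivative_transform_within_open[OF assms(4) assms(1) assms(2) assms(3)])
  then show ?thesis using assms(5) DERIV_unique by blast
qed

lemma quot_deriv:
  fixes N F :: "real \<Rightarrow> real"
  assumes "(N has_real_derivative N') (at x)" "(F has_real_derivative - g) (at x)" "F x \<noteq> 0"
  shows "((\<lambda>y. N y / F y ^ k) has_real_derivative (N' * F x + real k * g * N x) / F x ^ Suc k) (at x)"
proof -
  have D: "((\<lambda>y. N y / F y ^ k) has_real_derivative (N' * F x ^ k - N x * (real k * F x ^ (k - 1) * - g)) / (F x ^ k * F x ^ k)) (at x)"
  proof (rule DERIV_divide[OF assms(1)])
    show "((\<lambda>y. F y ^ k) has_real_derivative real k * F x ^ (k - 1) * - g) (at x)"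
      using DERIV_power[OF assms(2), of k] by (simp add: algebra_simps)
    show "F x ^ k \<noteq> 0" using assms(3) by simp
  qed
  have "(N' * F x ^ k - N x * (real k * F x ^ (k - 1) * - g)) / (F x ^ k * F x ^ k) = (N' * F x + real k * g * N x) / F x ^ Suc k"
  proof (cases k)
    case 0 then show ?thesis using assms(3) by (simp add: field_simps)
  next
    case (Suc m) then show ?thesis using assms(3) by (simp add: field_simps power_Suc)
  qed
  with D show ?thesis by simp
qed

context fixes t :: real assumes t: "t > -1"
begin

definition "F = ps (cc t)"
definition "G = ps (cc (t+1))"
definition "G1 = ps (diffs (cc (t+1)))"
definition "G2 = ps (diffs (diffs (cc (t+1))))"
definition "G3 = ps (diffs (diffs (diffs (cc (t+1)))))"

lemma sum0: "summable (\<lambda>n. cc (t+1) n * y ^ n)" using t by (intro cc_summable) auto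
lemma sum1: "summable (\<lambda>n. diffs (cc (t+1)) n * y ^ n)" by (intro diffs_summable sum0)
lemma sum2: "summable (\<lambda>n. diffs (diffs (cc (t+1))) n * y ^ n)" by (intro diffs_summable sum1)

lemma dG: "(G has_real_derivative G1 y) (at y)" unfolding G_def G1_def by (intro ps_deriv sum0)
lemma dG1: "(G1 has_real_derivative G2 y) (at y)" unfolding G2_def G1_def by (intro ps_deriv sum1)
lemma dG2: "(G2 has_real_derivative G3 y) (at y)" unfolding G2_def G3_def by (intro ps_deriv sum2)
lemma dF: "(F has_real_derivative - G y) (at y)"
proof -
  have "(F has_real_derivative ps (diffs (cc t)) y) (at y)"
    unfolding F_def by (intro ps_deriv cc_summable t)
  moreover have "ps (diffs (cc t)) y = - G y"
    unfolding G_def ps_def diffs_cc[OF t] using suminf_minus[OF sum0[of y]] by simp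
  ultimately show ?thesis by simp
qed

lemma Grel: "y * G1 y = F y - (t+1) * G y"
  unfolding G1_def F_def G_def by (rule G_rel[OF t])

lemma F0: "F 0 \<noteq> 0"
proof -
  have "Gamma (t + 1) > 0" using t by (intro Gamma_real_pos) simp
  then show ?thesis unfolding F_def ps_def powser_zero by (simp add: cc_def)
qed

lemma contF: "continuous_on UNIV F"
  by (meson DERIV_isCont continuous_at_imp_continuous_on dF)

lemma openF: "open {y. F y \<noteq> 0}"
  by (rule open_Collect_neq[OF contF]) simp

definition "u y = G y / F y"
definition "N1 y = G1 y * F y + G y * G y"
definition "U1 y = N1 y / F y ^ 2"
definition "N1d y = G2 y * F y + G y * G1 y"
definition "N2 y = N1d y * F y + 2 * G y * N1 y"
definition "U2 y = N2 y / F y ^ 3"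
definition "N2d y = (G3 y * F y + G1 y * G1 y) * F y + G y * N1d y + 2 * G1 y * N1 y"
definition "U3 y = (N2d y * F y + 3 * G y * N2 y) / F y ^ 4"

lemma dN1: "(N1 has_real_derivative N1d y) (at y)"
  unfolding N1_def[abs_def] N1d_def
  by (rule derivative_eq_intros dG dF dG1 refl | simp add: algebra_simps)+

lemma dN2: "(N2 has_real_derivative N2d y) (at y)"
  unfolding N2_def[abs_def] N2d_def N1d_def[abs_def]
  by (rule derivative_eq_intros dG dF dG1 dG2 dN1[unfolded N1d_def] refl | simp add: algebra_simps)+

lemma du: "F y \<noteq> 0 \<Longrightarrow> (u has_real_derivative U1 y) (at y)"
  using quot_deriv[OF dG dF, of y 1] unfolding u_def[abs_def] U1_def N1_def by (simp add: power2_eq_square)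

lemma dU1: "F y \<noteq> 0 \<Longrightarrow> (U1 has_real_derivative U2 y) (at y)"
  using quot_deriv[OF dN1 dF, of y 2] unfolding U1_def[abs_def] U2_def N2_def by simp

lemma dU2: "F y \<noteq> 0 \<Longrightarrow> (U2 has_real_derivative U3 y) (at y)"
  using quot_deriv[OF dN2 dF, of y 3] unfolding U2_def[abs_def] U3_def by simp

lemma R0: assumes "F y \<noteq> 0" shows "y * U1 y = 1 - (t+1) * u y + y * u y ^ 2"
proof -
  have "y * U1 y = ((y * G1 y) * F y + y * G y * G y) / F y ^ 2"
    by (simp add: U1_def N1_def field_simps)
  also have "\<dots> = ((F y - (t+1) * G y) * F y + y * G y * G y) / F y ^ 2" by (simp add: Grel)
  also have "\<dots> = 1 - (t+1) * u y + y * u y ^ 2" using assms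
    by (simp add: u_def field_simps power2_eq_square)
  finally show ?thesis .
qed

lemma R1: assumes "F y \<noteq> 0" shows "U1 y + y * U2 y = -(t+1) * U1 y + u y ^ 2 + y * (2 * u y * U1 y)"
proof -
  have "1 * U1 y + y * U2 y = -(t+1) * U1 y + (u y ^ 2 + y * (2 * u y * U1 y))"
  proof (rule deriv_eq_open[OF openF _ R0])
    show "y \<in> {y. F y \<noteq> 0}" using assms by simp
    show "((\<lambda>y. y * U1 y) has_real_derivative 1 * U1 y + y * U2 y) (at y)"
      using DERIV_mult[OF DERIV_ident dU1[OF assms]] by (simp add: algebra_simps)
    show "((\<lambda>y. 1 - (t + 1) * u y + y * u y ^ 2) has_real_derivative -(t+1) * U1 y + (u y ^ 2 + y * (2 * u y * U1 y))) (at y)"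
      by (rule derivative_eq_intros du assms refl | simp add: algebra_simps)+
  qed simp
  then show ?thesis by simp
qed

lemma R2: assumes "F y \<noteq> 0" shows "2 * U2 y + y * U3 y = -(t+1) * U2 y + 4 * u y * U1 y + 2 * y * U1 y ^ 2 + 2 * y * u y * U2 y"
proof -
  have "U2 y + (1 * U2 y + y * U3 y) = -(t+1) * U2 y + 4 * u y * U1 y + 2 * y * U1 y ^ 2 + 2 * y * u y * U2 y"
  proof (rule deriv_eq_open[OF openF _ R1])
    show "y \<in> {y. F y \<noteq> 0}" using assms by simp
    show "((\<lambda>y. U1 y + y * U2 y) has_real_derivative U2 y + (1 * U2 y + y * U3 y)) (at y)"
      using DERIV_add[OF dU1[OF assms] DERIV_mult[OF DERIV_ident dU2[OF assms]]] by (simp add: algebra_simps)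
    show "((\<lambda>y. -(t+1) * U1 y + u y ^ 2 + y * (2 * u y * U1 y)) has_real_derivative -(t+1) * U2 y + 4 * u y * U1 y + 2 * y * U1 y ^ 2 + 2 * y * u y * U2 y) (at y)"
      by (rule derivative_eq_intros du dU1 assms refl | simp add: algebra_simps power2_eq_square)+
  qed simp
  then show ?thesis by simp
qed

lemma u0: "u 0 = 1 / (t+1)" using R0[OF F0] t by (simp add: field_simps)

lemma U10: "U1 0 > 0"
proof -
  have "(t+2) * U1 0 = u 0 ^ 2" using R1[OF F0] by (simp add: algebra_simps)
  moreover have "u 0 ^ 2 > 0" using u0 t by simp
  ultimately have "(t+2) * U1 0 > 0" by simp
  then show ?thesis using t by (simp add: zero_less_mult_iff)
qed

lemma U20: "U2 0 > 0"
proof -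
  have "(t+3) * U2 0 = 4 * u 0 * U1 0" using R2[OF F0] by (simp add: algebra_simps)
  moreover have "4 * u 0 * U1 0 > 0" using u0 t U10 by simp
  ultimately have "(t+3) * U2 0 > 0" by simp
  then show ?thesis using t by (simp add: zero_less_mult_iff)
qed

lemma P0: assumes H: "\<And>y. 0 \<le> y \<Longrightarrow> y \<le> b \<Longrightarrow> F y \<noteq> 0" and b: "0 \<le> b" shows "u b > 0"
proof (rule first_pos[OF b])
  show "(u has_real_derivative U1 y) (at y)" if "0 \<le> y" "y \<le> b" for y using du H that by blast
  show "u 0 > 0" using u0 t by simp
  show "U1 y > 0" if "0 < y" "y \<le> b" "u y = 0" for y
  proof -
    have "y * U1 y = 1" using R0[OF H[of y]] that by simp
    then show ?thesis using that by (smt (verit) mult_nonneg_nonpos)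
  qed
qed

lemma P1: assumes H: "\<And>y. 0 \<le> y \<Longrightarrow> y \<le> b \<Longrightarrow> F y \<noteq> 0" and b: "0 \<le> b" shows "U1 b > 0"
proof (rule first_pos[OF b])
  show "(U1 has_real_derivative U2 y) (at y)" if "0 \<le> y" "y \<le> b" for y using dU1 H that by blast
  show "U1 0 > 0" by (rule U10)
  show "U2 y > 0" if "0 < y" "y \<le> b" "U1 y = 0" for y
  proof -
    have "u y > 0" using P0[of y] H that by simp
    moreover have "y * U2 y = u y ^ 2" using R1[OF H[of y]] that by simp
    ultimately show ?thesis using that by (smt (verit) mult_nonneg_nonpos zero_less_power)
  qed
qed

lemma P2: assumes H: "\<And>y. 0 \<le> y \<Longrightarrow> y \<le> b \<Longrightarrow> F y \<noteq> 0" and b: "0 \<le> b" shows "U2 b > 0"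
proof (rule first_pos[OF b])
  show "(U2 has_real_derivative U3 y) (at y)" if "0 \<le> y" "y \<le> b" for y using dU2 H that by blast
  show "U2 0 > 0" by (rule U20)
  show "U3 y > 0" if "0 < y" "y \<le> b" "U2 y = 0" for y
  proof -
    have "u y > 0" using P0[of y] H that by simp
    moreover have "U1 y > 0" using P1[of y] H that by simp
    moreover have "y * U3 y = 4 * u y * U1 y + 2 * y * U1 y ^ 2" using R2[OF H[of y]] that by simp
    moreover have "4 * u y * U1 y + 2 * y * U1 y ^ 2 > 0" using calculation that
      by (simp add: add_pos_nonneg)
    ultimately show ?thesis using that by (smt (verit) mult_nonneg_nonpos)
  qed
qed

definition "V y = u y + y * U1 y"

lemma dV: "F y \<noteq> 0 \<Longrightarrow> (V has_real_derivative 2 * U1 y + y * U2 y) (at y)"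
  unfolding V_def[abs_def]
  using DERIV_add[OF du DERIV_mult[OF DERIV_ident dU1]] by (simp add: algebra_simps)

lemma V_mono: assumes H: "\<And>y. 0 \<le> y \<Longrightarrow> y < X \<Longrightarrow> F y \<noteq> 0"
  and "0 \<le> y1" "y1 < y2" "y2 < X" shows "V y1 < V y2"
proof (rule DERIV_pos_imp_increasing[OF assms(3)])
  fix x assume x: "y1 \<le> x" "x \<le> y2"
  have H': "\<And>y. 0 \<le> y \<Longrightarrow> y \<le> x \<Longrightarrow> F y \<noteq> 0" using H x assms by force
  have "U1 x > 0" "U2 x > 0" using P1[OF H'] P2[OF H'] x assms by auto
  then have "2 * U1 x + x * U2 x > 0" using x assms by (simp add: add_pos_nonneg)
  moreover have "F x \<noteq> 0" using H' x assms by auto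
  ultimately show "\<exists>z. (V has_real_derivative z) (at x) \<and> z > 0" using dV by blast
qed

end


lemma J_repr: assumes t: "t > -1" and r: "r > 0"
  shows "besselJ t r = (r/2) powr t * F t (r^2/4)"
proof -
  have e: "cc t m * (r/2) powr (2 * real m + t) = (r/2) powr t * (cc t m * (r^2/4) ^ m)" for m
  proof -
    have "(r/2) powr (2 * real m + t) = (r/2) powr t * (r/2) powr (real (2*m))"
      by (simp add: powr_add)
    also have "(r/2) powr (real (2*m)) = (r/2) ^ (2*m)" using r by (intro powr_realpow) simp
    also have "(r/2) ^ (2*m) = (r^2/4) ^ m" by (simp add: power_mult power_divide)
    finally show ?thesis by simp
  qed
  have "besselJ t r = (\<Sum>m. cc t m * (r/2) powr (2 * real m + t))"
    unfolding besselJ_def cc_def by (rule refl)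
  also have "\<dots> = (\<Sum>m. (r/2) powr t * (cc t m * (r^2/4) ^ m))"
    by (simp only: e)
  also have "\<dots> = (r/2) powr t * F t (r^2/4)"
    unfolding F_def[OF t] ps_def by (rule suminf_mult[OF cc_summable[OF t]])
  finally show ?thesis .
qed

lemma h_repr: assumes t: "t > -1" and r: "r > 0"
  shows "h_u t r = 2 * ((r^2/4) * u t (r^2/4))"
proof -
  have t1: "t + 1 > -1" using t by simp
  have "besselJ (t+1) r = (r/2) powr t * (r/2) * G t (r^2/4)"
    using J_repr[OF t1 r] r by (simp add: powr_add G_def[OF t] F_def[OF t1])
  moreover have "besselJ t r = (r/2) powr t * F t (r^2/4)" by (rule J_repr[OF t r])
  moreover have "(r/2) powr t > 0" using r by simp
  ultimately show ?thesis unfolding h_u_def u_def[OF t]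
    by (cases "F t (r^2/4) = 0") (auto simp: field_simps power2_eq_square)
qed

lemma deriv_h: assumes t: "t > -1" and r: "r > 0" and Fn: "F t (r^2/4) \<noteq> 0"
  shows "deriv (h_u t) r = r * V t (r^2/4)"
proof -
  have dW: "((\<lambda>x. x * u t x) has_real_derivative V t (r^2/4)) (at (r^2/4))"
    using DERIV_mult[OF DERIV_ident du[OF t Fn]] by (simp add: V_def[OF t] algebra_simps)
  have dq: "((\<lambda>y. y^2/4) has_real_derivative r/2) (at r)"
    by (rule derivative_eq_intros refl | simp)+
  have "((\<lambda>y. 2 * ((y^2/4) * u t (y^2/4))) has_real_derivative 2 * (V t (r^2/4) * (r/2))) (at r)"
    by (intro DERIV_cmult DERIV_chain2[OF dW dq])
  then have "(h_u t has_real_derivative 2 * (V t (r^2/4) * (r/2))) (at r)"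
    by (rule has_field_derivative_transform_within_open[where S="{0<..}"]) (use r h_repr[OF t] in auto)
  then show ?thesis by (simp add: DERIV_imp_deriv)
qed

theorem propositionA2:
  fixes \<tau> :: real
  assumes "\<tau> > -1"
  shows "strict_mono_on {0<..<bessel_zero \<tau>} (\<lambda>r. deriv (h_u \<tau>) r / r)"
proof (rule strict_mono_onI)
  fix r1 r2 assume r1: "r1 \<in> {0<..<bessel_zero \<tau>}" and r2: "r2 \<in> {0<..<bessel_zero \<tau>}" and lt: "r1 < r2"
  define b where "b = bessel_zero \<tau>"
  have Jnz: "besselJ \<tau> r \<noteq> 0" if "0 < r" "r < b" for r
  proof
    assume "besselJ \<tau> r = 0"
    then have "r \<in> {r. 0 < r \<and> besselJ \<tau> r = 0}" using that by simp
    then have "b \<le> r" unfolding b_def bessel_zero_def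
      by (rule cInf_lower) (auto intro!: bdd_belowI[of _ 0])
    then show False using that by simp
  qed
  have H: "F \<tau> y \<noteq> 0" if "0 \<le> y" "y < b^2/4" for y
  proof (cases "y = 0")
    case True then show ?thesis using F0[OF assms] by simp
  next
    case False
    define r where "r = 2 * sqrt y"
    have rp: "r > 0" using False that unfolding r_def by simp
    have ry: "r^2/4 = y" using that unfolding r_def by (simp add: power_mult_distrib)
    have "b > 0" using r1 unfolding b_def by simp
    have "sqrt y < sqrt (b^2/4)" using that by (intro real_sqrt_less_mono) simp
    also have "sqrt (b^2/4) = b/2" using \<open>b > 0\<close> by (simp add: real_sqrt_divide)
    finally have "r < b" unfolding r_def by simp
    then have "besselJ \<tau> r \<noteq> 0" using Jnz rp by simp
    then show ?thesis using J_repr[OF assms rp] ry by auto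
  qed
  have y2: "r2^2/4 < b^2/4" using r2 unfolding b_def by (simp add: power_strict_mono)
  have y12: "r1^2/4 < r2^2/4" using r1 lt by (simp add: power_strict_mono)
  have "V \<tau> (r1^2/4) < V \<tau> (r2^2/4)"
    by (rule V_mono[OF assms, where X="b^2/4", OF H]) (use y2 y12 in auto)
  moreover have "deriv (h_u \<tau>) r1 / r1 = V \<tau> (r1^2/4)"
    using deriv_h[OF assms, of r1] H[of "r1^2/4"] r1 y12 y2 by simp
  moreover have "deriv (h_u \<tau>) r2 / r2 = V \<tau> (r2^2/4)"
    using deriv_h[OF assms, of r2] H[of "r2^2/4"] r2 y2 by simp
  ultimately show "deriv (h_u \<tau>) r1 / r1 < deriv (h_u \<tau>) r2 / r2" by simp
qed

end
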